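(* Let $(M,J,g)$ be an almost Hermitian manifold with canonical (almost Chern) connection $\nabla$, let $p\in M$, and let $\{e_i\}$ be a local $(1,0)$-frame that is pseudo holomorphic at $p$ (each $e_i$ is pseudo holomorphic at $p$). Then: (a) $\Gamma^{\ell}_{\bar j k}(p)=0$; (b) $\Gamma^{\bar\ell}_{j\bar k}(p)=0$; (c) $[e_j,\bar e_k](p)=0$; (d) $\Gamma^k_{ij}(p)=e_i[g_{j\bar\ell}](p)\,g^{k\bar\ell}(p)$; (e) $\Gamma^{\bar k}_{\bar i\bar j}(p)=\bar e_i[g_{\ell\bar j}](p)\,g^{\ell\bar k}(p)$; (f) if $\{e_i\}$ is quasi holomorphic at $p$, then $(\nabla_{e_i}\nabla_{\bar e_j}e_k)(p)=0$; (g) if $\{e_i\}$ is quasi holomorphic at $p$, then $R_{i\bar jk\bar\ell}(p)=-\bar e_j[e_i[g_{k\bar\ell}]](p)+g^{a\bar b}e_i[g_{k\bar b}]\,\bar e_j[g_{a\bar\ell}](p)$; (h) if $\{e_i\}$ is normal quasi holomorphic at $p$, then $R_{i\bar jk\bar\ell}(p)=-\bar e_j[e_i[g_{k\bar\ell}]](p)$.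
   Context: An almost Hermitian manifold $(M,J,g)$: $J^2=-\mathrm{Id}$ on $TM$, $g(J\cdot,J\cdot)=g$. The canonical (almost Chern) connection is the unique connection $\nabla$ with $\nabla g=0$, $\nabla J=0$, and torsion with vanishing $(1,1)$-component; $g$ and $\nabla$ are extended complex-(bi)linearly to $T^{\mathbb C}M=T^{1,0}M\oplus T^{0,1}M$. For a $(1,0)$-frame $\{e_i\}$ with dual coframe $\{\theta^i\}$, Christoffel symbols are defined by $\nabla_{e_A}e_B=\Gamma^C_{AB}e_C$ where indices range over both $e_i$ and $\bar e_i$ (e.g. $\Gamma^\ell_{\bar jk}=\theta^\ell(\nabla_{\bar e_j}e_k)$, and $\Gamma^{\bar\ell}_{j\bar k}$ is the $\bar e_\ell$-coefficient of $\nabla_{e_j}\bar e_k$). Set $g_{k\bar\ell}=g(e_k,\bar e_\ell)$ and let $g^{k\bar\ell}$ be the inverse matrix, $g^{k\bar\ell}g_{m\bar\ell}=\delta^k_m$; repeated indices are summed. Curvature: $R_{i\bar jk\bar\ell}=g(\nabla_{e_i}\nabla_{\bar e_j}e_k-\nabla_{\bar e_j}\nabla_{e_i}e_k-\nabla_{[e_i,\bar e_j]}e_k,\bar e_\ell)$. For a complex vector field $V$, $V^{1,0}$ is its $T^{1,0}M$-component. A $(1,0)$-vector field $W$ is pseudo holomorphic at $p$ if $[\bar X,W]^{1,0}(p)=0$ for every $(1,0)$-vector field $X$; it is quasi holomorphic at $p$ if it is pseudo holomorphic at $p$ and $[X,[\bar Y,W]]^{1,0}(p)=0$ for all $(1,0)$-vector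 fields $X,Y$ that are pseudo holomorphic at $p$; it is normal pseudo (resp. quasi) holomorphic at $p$ if in addition $(\nabla W)(p)=0$. A frame has one of these properties if each of its members does. *)

theory Defs
  imports "HOL-Analysis.Analysis"
begin

text \<open>Local model: the almost Hermitian manifold is represented by an open coordinate
 domain U in R^m (m = 2n).  Real tangent vectors are real^'m, complexified tangent
 vectors are complex^'m.\<close>

fun ah_Ck :: "nat \<Rightarrow> (real^'m) set \<Rightarrow> (real^'m \<Rightarrow> complex) \<Rightarrow> bool" where
  "ah_Ck 0 U f = continuous_on U f"
| "ah_Ck (Suc k) U f =
     ((\<forall>x\<in>U. f differentiable (at x)) \<and>
      (\<forall>a. ah_Ck k U (\<lambda>x. frechet_derivative f (at x) (axis a 1))))"

definition ah_smooth :: "(real^'m) set \<Rightarrow> (real^'m \<Rightarrow> complex) \<Rightarrow> bool" where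
  "ah_smooth U f \<longleftrightarrow> (\<forall>k. ah_Ck k U f)"

definition ah_field :: "(real^'m) set \<Rightarrow> (real^'m \<Rightarrow> complex^'m) \<Rightarrow> bool" where
  "ah_field U Y \<longleftrightarrow> (\<forall>c. ah_smooth U (\<lambda>x. Y x $ c))"

definition ah_dirc :: "complex^'m \<Rightarrow> (real^'m \<Rightarrow> complex) \<Rightarrow> real^'m \<Rightarrow> complex" where
  "ah_dirc v f x = (\<Sum>a\<in>UNIV. v $ a * frechet_derivative f (at x) (axis a 1))"

definition ah_dirv :: "complex^'m \<Rightarrow> (real^'m \<Rightarrow> complex^'m) \<Rightarrow> real^'m \<Rightarrow> complex^'m" where
  "ah_dirv v Y x = (\<chi> c. ah_dirc v (\<lambda>y. Y y $ c) x)"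

definition ah_vf :: "(real^'m \<Rightarrow> complex^'m) \<Rightarrow> (real^'m \<Rightarrow> complex) \<Rightarrow> real^'m \<Rightarrow> complex" where
  "ah_vf X f x = ah_dirc (X x) f x"

definition ah_lie :: "(real^'m \<Rightarrow> complex^'m) \<Rightarrow> (real^'m \<Rightarrow> complex^'m) \<Rightarrow> real^'m \<Rightarrow> complex^'m" where
  "ah_lie X Y x = ah_dirv (X x) Y x - ah_dirv (Y x) X x"

definition vcnj :: "complex^'m \<Rightarrow> complex^'m" where
  "vcnj v = (\<chi> c. cnj (v $ c))"

definition fcnj :: "(real^'m \<Rightarrow> complex^'m) \<Rightarrow> real^'m \<Rightarrow> complex^'m" where
  "fcnj X = (\<lambda>x. vcnj (X x))"

text \<open>Complex-linear extension of J and complex-bilinear extension of g.\<close>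
definition Jc :: "(real^'m \<Rightarrow> real^'m^'m) \<Rightarrow> real^'m \<Rightarrow> complex^'m \<Rightarrow> complex^'m" where
  "Jc J x v = (\<chi> c. \<Sum>b\<in>UNIV. complex_of_real (J x $ c $ b) * v $ b)"

definition gc :: "(real^'m \<Rightarrow> real^'m^'m) \<Rightarrow> real^'m \<Rightarrow> complex^'m \<Rightarrow> complex^'m \<Rightarrow> complex" where
  "gc g x v w = (\<Sum>a\<in>UNIV. \<Sum>b\<in>UNIV. v $ a * complex_of_real (g x $ a $ b) * w $ b)"

definition almost_hermitian ::
  "(real^'m) set \<Rightarrow> (real^'m \<Rightarrow> real^'m^'m) \<Rightarrow> (real^'m \<Rightarrow> real^'m^'m) \<Rightarrow> bool" where
  "almost_hermitian U J g \<longleftrightarrow>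
     open U \<and>
     (\<forall>a b. ah_smooth U (\<lambda>x. complex_of_real (J x $ a $ b))) \<and>
     (\<forall>a b. ah_smooth U (\<lambda>x. complex_of_real (g x $ a $ b))) \<and>
     (\<forall>x\<in>U. J x ** J x = - mat 1) \<and>
     (\<forall>x\<in>U. transpose (g x) = g x) \<and>
     (\<forall>x\<in>U. \<forall>v. v \<noteq> 0 \<longrightarrow> v \<bullet> (g x *v v) > 0) \<and>
     (\<forall>x\<in>U. \<forall>v w. (J x *v v) \<bullet> (g x *v (J x *v w)) = v \<bullet> (g x *v w))"

definition proj10 :: "(real^'m \<Rightarrow> real^'m^'m) \<Rightarrow> real^'m \<Rightarrow> complex^'m \<Rightarrow> complex^'m" where
  "proj10 J x v = (1/2 :: complex) *s (v - \<i> *s Jc J x v)"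

definition field10 :: "(real^'m) set \<Rightarrow> (real^'m \<Rightarrow> real^'m^'m) \<Rightarrow> (real^'m \<Rightarrow> complex^'m) \<Rightarrow> bool" where
  "field10 U J X \<longleftrightarrow> ah_field U X \<and> (\<forall>x\<in>U. Jc J x (X x) = \<i> *s X x)"

text \<open>A connection on U given by its real coordinate Christoffel symbols
  Gam x a b c (nabla_{d_a} d_b = sum_c Gam x a b c d_c), extended complex-linearly.\<close>
definition nablav :: "(real^'m \<Rightarrow> 'm \<Rightarrow> 'm \<Rightarrow> 'm \<Rightarrow> real) \<Rightarrow> real^'m \<Rightarrow> complex^'m
     \<Rightarrow> (real^'m \<Rightarrow> complex^'m) \<Rightarrow> complex^'m" where
  "nablav Gam x v Y = ah_dirv v Y x +
     (\<chi> c. \<Sum>a\<in>UNIV. \<Sum>b\<in>UNIV. v $ a * Y x $ b * complex_of_real (Gam x a b c))"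

definition nabla :: "(real^'m \<Rightarrow> 'm \<Rightarrow> 'm \<Rightarrow> 'm \<Rightarrow> real) \<Rightarrow> (real^'m \<Rightarrow> complex^'m)
     \<Rightarrow> (real^'m \<Rightarrow> complex^'m) \<Rightarrow> real^'m \<Rightarrow> complex^'m" where
  "nabla Gam X Y x = nablav Gam x (X x) Y"

definition torsion :: "(real^'m \<Rightarrow> 'm \<Rightarrow> 'm \<Rightarrow> 'm \<Rightarrow> real) \<Rightarrow> (real^'m \<Rightarrow> complex^'m)
     \<Rightarrow> (real^'m \<Rightarrow> complex^'m) \<Rightarrow> real^'m \<Rightarrow> complex^'m" where
  "torsion Gam X Y x = nabla Gam X Y x - nabla Gam Y X x - ah_lie X Y x"

text \<open>The canonical (almost Chern) connection: nabla g = 0, nabla J = 0 and the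
  (1,1)-component of the torsion vanishes, i.e. T(X, Ybar) = 0 for (1,0)-fields X, Y.\<close>
definition canonical_connection ::
  "(real^'m) set \<Rightarrow> (real^'m \<Rightarrow> real^'m^'m) \<Rightarrow> (real^'m \<Rightarrow> real^'m^'m)
     \<Rightarrow> (real^'m \<Rightarrow> 'm \<Rightarrow> 'm \<Rightarrow> 'm \<Rightarrow> real) \<Rightarrow> bool" where
  "canonical_connection U J g Gam \<longleftrightarrow>
     (\<forall>a b c. ah_smooth U (\<lambda>x. complex_of_real (Gam x a b c))) \<and>
     (\<forall>Y Z. ah_field U Y \<longrightarrow> ah_field U Z \<longrightarrow> (\<forall>x\<in>U. \<forall>v.
        ah_dirc v (\<lambda>y. gc g y (Y y) (Z y)) x =
        gc g x (nablav Gam x v Y) (Z x) + gc g x (Y x) (nablav Gam x v Z))) \<and>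
     (\<forall>Y. ah_field U Y \<longrightarrow> (\<forall>x\<in>U. \<forall>v.
        nablav Gam x v (\<lambda>y. Jc J y (Y y)) = Jc J x (nablav Gam x v Y))) \<and>
     (\<forall>X Y. field10 U J X \<longrightarrow> field10 U J Y \<longrightarrow>
        (\<forall>x\<in>U. torsion Gam X (fcnj Y) x = 0))"

text \<open>A local (1,0)-frame on U: n = CARD('n) smooth (1,0)-fields, C-linearly
  independent at every point (hence a basis of T^{1,0} when CARD('m) = 2 n).\<close>
definition frame10 :: "(real^'m) set \<Rightarrow> (real^'m \<Rightarrow> real^'m^'m)
     \<Rightarrow> ('n \<Rightarrow> real^'m \<Rightarrow> complex^'m) \<Rightarrow> bool" where
  "frame10 U J e \<longleftrightarrow> (\<forall>i. field10 U J (e i)) \<and>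
     (\<forall>x\<in>U. \<forall>c::'n \<Rightarrow> complex. (\<Sum>i\<in>UNIV. c i *s e i x) = 0 \<longrightarrow> (\<forall>i. c i = 0))"

text \<open>Combined frame {e_i, ebar_i}: Inl i stands for e_i, Inr i for ebar_i.\<close>
definition frameE :: "('n \<Rightarrow> real^'m \<Rightarrow> complex^'m) \<Rightarrow> 'n + 'n \<Rightarrow> real^'m \<Rightarrow> complex^'m" where
  "frameE e A = (case A of Inl i \<Rightarrow> e i | Inr i \<Rightarrow> fcnj (e i))"

text \<open>Christoffel symbols: nabla_{E_A} E_B = Gamma^C_{AB} E_C.\<close>
definition chr :: "(real^'m \<Rightarrow> 'm \<Rightarrow> 'm \<Rightarrow> 'm \<Rightarrow> real) \<Rightarrow> ('n \<Rightarrow> real^'m \<Rightarrow> complex^'m)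
     \<Rightarrow> 'n + 'n \<Rightarrow> 'n + 'n \<Rightarrow> 'n + 'n \<Rightarrow> real^'m \<Rightarrow> complex" where
  "chr Gam e A B C x =
     (THE c :: 'n + 'n \<Rightarrow> complex.
        nabla Gam (frameE e A) (frameE e B) x = (\<Sum>D\<in>UNIV. c D *s frameE e D x)) C"

definition gfr :: "(real^'m \<Rightarrow> real^'m^'m) \<Rightarrow> ('n \<Rightarrow> real^'m \<Rightarrow> complex^'m)
     \<Rightarrow> 'n \<Rightarrow> 'n \<Rightarrow> real^'m \<Rightarrow> complex" where
  "gfr g e k l x = gc g x (e k x) (vcnj (e l x))"

text \<open>Inverse matrix g^{k lbar}: sum_l g^{k lbar} g_{m lbar} = delta^k_m.\<close>
definition ginv :: "(real^'m \<Rightarrow> real^'m^'m) \<Rightarrow> ('n \<Rightarrow> real^'m \<Rightarrow> complex^'m)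
     \<Rightarrow> real^'m \<Rightarrow> 'n \<Rightarrow> 'n \<Rightarrow> complex" where
  "ginv g e x = (THE H :: 'n \<Rightarrow> 'n \<Rightarrow> complex.
     \<forall>k m. (\<Sum>l\<in>UNIV. H k l * gfr g e m l x) = (if k = m then 1 else 0))"

definition curv :: "(real^'m \<Rightarrow> real^'m^'m) \<Rightarrow> (real^'m \<Rightarrow> 'm \<Rightarrow> 'm \<Rightarrow> 'm \<Rightarrow> real)
     \<Rightarrow> ('n \<Rightarrow> real^'m \<Rightarrow> complex^'m) \<Rightarrow> 'n \<Rightarrow> 'n \<Rightarrow> 'n \<Rightarrow> 'n \<Rightarrow> real^'m \<Rightarrow> complex" where
  "curv g Gam e i j k l x =
     gc g x (nabla Gam (e i) (nabla Gam (fcnj (e j)) (e k)) x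
             - nabla Gam (fcnj (e j)) (nabla Gam (e i) (e k)) x
             - nabla Gam (ah_lie (e i) (fcnj (e j))) (e k) x)
          (vcnj (e l x))"

definition pseudo_hol :: "(real^'m) set \<Rightarrow> (real^'m \<Rightarrow> real^'m^'m)
     \<Rightarrow> (real^'m \<Rightarrow> complex^'m) \<Rightarrow> real^'m \<Rightarrow> bool" where
  "pseudo_hol U J W p \<longleftrightarrow> field10 U J W \<and>
     (\<forall>X. field10 U J X \<longrightarrow> proj10 J p (ah_lie (fcnj X) W p) = 0)"

definition quasi_hol :: "(real^'m) set \<Rightarrow> (real^'m \<Rightarrow> real^'m^'m)
     \<Rightarrow> (real^'m \<Rightarrow> complex^'m) \<Rightarrow> real^'m \<Rightarrow> bool" where
  "quasi_hol U J W p \<longleftrightarrow> pseudo_hol U J W p \<and>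
     (\<forall>X Y. field10 U J X \<longrightarrow> field10 U J Y \<longrightarrow> pseudo_hol U J X p \<longrightarrow> pseudo_hol U J Y p \<longrightarrow>
        proj10 J p (ah_lie X (ah_lie (fcnj Y) W) p) = 0)"

definition nabla_vanishes :: "(real^'m \<Rightarrow> 'm \<Rightarrow> 'm \<Rightarrow> 'm \<Rightarrow> real)
     \<Rightarrow> (real^'m \<Rightarrow> complex^'m) \<Rightarrow> real^'m \<Rightarrow> bool" where
  "nabla_vanishes Gam W p \<longleftrightarrow> (\<forall>v. nablav Gam p v W = 0)"

definition normal_quasi_hol :: "(real^'m) set \<Rightarrow> (real^'m \<Rightarrow> real^'m^'m)
     \<Rightarrow> (real^'m \<Rightarrow> 'm \<Rightarrow> 'm \<Rightarrow> 'm \<Rightarrow> real) \<Rightarrow> (real^'m \<Rightarrow> complex^'m) \<Rightarrow> real^'m \<Rightarrow> bool" where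
  "normal_quasi_hol U J Gam W p \<longleftrightarrow> quasi_hol U J W p \<and> nabla_vanishes Gam W p"

end

theory Submission
  imports Defs
begin


definition Dp :: "(real^'m \<Rightarrow> complex) \<Rightarrow> 'm \<Rightarrow> real^'m \<Rightarrow> complex" where
  "Dp f a x = frechet_derivative f (at x) (axis a 1)"

lemma fd_cong:
  assumes "open U" "x \<in> U" "\<And>y. y \<in> U \<Longrightarrow> f y = g y"
  shows "frechet_derivative f (at x) = frechet_derivative g (at x)"
proof -
  have "(f has_derivative D) (at x) \<longleftrightarrow> (g has_derivative D) (at x)" for D
  proof
    assume "(f has_derivative D) (at x)"
    then show "(g has_derivative D) (at x)"
      by (rule has_derivative_transform_within_open[OF _ assms(1,2)]) (simp add: assms(3))
  next
    assume "(g has_derivative D) (at x)"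
    then show "(f has_derivative D) (at x)"
      by (rule has_derivative_transform_within_open[OF _ assms(1,2)]) (simp add: assms(3))
  qed
  then show ?thesis unfolding frechet_derivative_def by simp
qed

lemma diff_cong:
  assumes "open U" "x \<in> U" "\<And>y. y \<in> U \<Longrightarrow> f y = g y"
  shows "f differentiable (at x) \<longleftrightarrow> g differentiable (at x)"
proof -
  have "(f has_derivative D) (at x) \<longleftrightarrow> (g has_derivative D) (at x)" for D
  proof
    assume "(f has_derivative D) (at x)"
    then show "(g has_derivative D) (at x)"
      by (rule has_derivative_transform_within_open[OF _ assms(1,2)]) (simp add: assms(3))
  next
    assume "(g has_derivative D) (at x)"
    then show "(f has_derivative D) (at x)"
      by (rule has_derivative_transform_within_open[OF _ assms(1,2)]) (simp add: assms(3))
  qed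
  then show ?thesis unfolding differentiable_def by simp
qed

lemma Ck_cong:
  assumes "open U" "\<And>y. y \<in> U \<Longrightarrow> f y = g y"
  shows "ah_Ck k U f = ah_Ck k U g"
  using assms
proof (induction k arbitrary: f g)
  case 0
  have "continuous_on U f = continuous_on U g"
    by (rule continuous_on_cong) (auto simp: 0)
  then show ?case by simp
next
  case (Suc k)
  have d: "(\<forall>x\<in>U. f differentiable (at x)) \<longleftrightarrow> (\<forall>x\<in>U. g differentiable (at x))"
    using diff_cong[OF Suc.prems(1)] Suc.prems(2) by blast
  have e: "ah_Ck k U (\<lambda>x. frechet_derivative f (at x) (axis a 1)) = ah_Ck k U (\<lambda>x. frechet_derivative g (at x) (axis a 1))" for a
    apply (rule Suc.IH[OF Suc.prems(1)])
    using fd_cong[OF Suc.prems(1) _ Suc.prems(2)] by simp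
  show ?case unfolding ah_Ck.simps using d e by presburger
qed

lemma Ck_transfer: "open U \<Longrightarrow> ah_Ck k U g \<Longrightarrow> (\<And>x. x \<in> U \<Longrightarrow> f x = g x) \<Longrightarrow> ah_Ck k U f"
  using Ck_cong[of U f g k] by blast

lemma Ck_Suc_imp: "open U \<Longrightarrow> ah_Ck (Suc k) U f \<Longrightarrow> ah_Ck k U f"
proof (induction k arbitrary: f)
  case 0
  then show ?case
    by (simp add: differentiable_imp_continuous_within continuous_at_imp_continuous_on)
next
  case (Suc k)
  then show ?case by simp
qed

lemma smooth_diff: "ah_smooth U f \<Longrightarrow> x \<in> U \<Longrightarrow> f differentiable (at x)"
  unfolding ah_smooth_def by (metis ah_Ck.simps(2))

lemma smooth_cont: "ah_smooth U f \<Longrightarrow> continuous_on U f"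
  unfolding ah_smooth_def by (metis ah_Ck.simps(1))

lemma smooth_D: "ah_smooth U f \<Longrightarrow> ah_smooth U (Dp f a)"
  unfolding ah_smooth_def Dp_def by (metis ah_Ck.simps(2))

lemma smooth_cong: "open U \<Longrightarrow> (\<And>y. y \<in> U \<Longrightarrow> f y = g y) \<Longrightarrow> ah_smooth U f = ah_smooth U g"
  unfolding ah_smooth_def using Ck_cong by blast

lemma Ck_const: "ah_Ck k U (\<lambda>x. c)"
proof (induction k arbitrary: c)
  case 0 then show ?case by simp
next
  case (Suc k)
  have "\<And>x. frechet_derivative (\<lambda>x. c) (at x) = (\<lambda>h. 0)"
    by (rule frechet_derivative_at[symmetric]) simp
  then show ?case using Suc by simp
qed

lemma Ck_add: "open U \<Longrightarrow> ah_Ck k U f \<Longrightarrow> ah_Ck k U g \<Longrightarrow> ah_Ck k U (\<lambda>x. f x + g x)"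
proof (induction k arbitrary: f g)
  case 0 then show ?case by (simp add: continuous_on_add)
next
  case (Suc k)
  have fd: "frechet_derivative (\<lambda>x. f x + g x) (at x) = (\<lambda>h. frechet_derivative f (at x) h + frechet_derivative g (at x) h)"
    if "x \<in> U" for x
  proof -
    have "f differentiable (at x)" "g differentiable (at x)" using Suc.prems that by auto
    then have "(f has_derivative frechet_derivative f (at x)) (at x)" "(g has_derivative frechet_derivative g (at x)) (at x)"
      by (simp_all add: frechet_derivative_works)
    from has_derivative_add[OF this] show ?thesis by (rule frechet_derivative_at[symmetric])
  qed
  have "ah_Ck k U (\<lambda>x. frechet_derivative (\<lambda>x. f x + g x) (at x) (axis a 1))" for a
  proof -
    have "ah_Ck k U (\<lambda>x. frechet_derivative f (at x) (axis a 1) + frechet_derivative g (at x) (axis a 1))"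
      using Suc by simp
    then show ?thesis by (rule Ck_transfer[OF Suc.prems(1)]) (simp add: fd)
  qed
  moreover have "\<forall>x\<in>U. (\<lambda>x. f x + g x) differentiable (at x)"
    using Suc.prems by (simp add: differentiable_add)
  ultimately show ?case by simp
qed

lemma Ck_mult: "open U \<Longrightarrow> ah_Ck k U f \<Longrightarrow> ah_Ck k U g \<Longrightarrow> ah_Ck k U (\<lambda>x. f x * g x)"
proof (induction k arbitrary: f g)
  case 0 then show ?case by (simp add: continuous_on_mult)
next
  case (Suc k)
  have fd: "frechet_derivative (\<lambda>x. f x * g x) (at x) = (\<lambda>h. f x * frechet_derivative g (at x) h + frechet_derivative f (at x) h * g x)"
    if "x \<in> U" for x
  proof -
    have "f differentiable (at x)" "g differentiable (at x)" using Suc.prems that by auto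
    then have "(f has_derivative frechet_derivative f (at x)) (at x)" "(g has_derivative frechet_derivative g (at x)) (at x)"
      by (simp_all add: frechet_derivative_works)
    from has_derivative_mult[OF this] show ?thesis by (rule frechet_derivative_at[symmetric])
  qed
  have "ah_Ck k U (\<lambda>x. frechet_derivative (\<lambda>x. f x * g x) (at x) (axis a 1))" for a
  proof -
    have f: "ah_Ck k U f" "ah_Ck k U g" using Ck_Suc_imp Suc.prems by blast+
    have "ah_Ck k U (\<lambda>x. f x * frechet_derivative g (at x) (axis a 1) + frechet_derivative f (at x) (axis a 1) * g x)"
      using Suc f by (intro Ck_add) simp_all
    then show ?thesis by (rule Ck_transfer[OF Suc.prems(1)]) (simp add: fd)
  qed
  moreover have "\<forall>x\<in>U. (\<lambda>x. f x * g x) differentiable (at x)"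
    using Suc.prems by (simp add: differentiable_mult)
  ultimately show ?case by simp
qed

lemma Ck_cnj: "open U \<Longrightarrow> ah_Ck k U f \<Longrightarrow> ah_Ck k U (\<lambda>x. cnj (f x))"
proof (induction k arbitrary: f)
  case 0 then show ?case by (simp add: continuous_on_cnj)
next
  case (Suc k)
  have fd: "frechet_derivative (\<lambda>x. cnj (f x)) (at x) = (\<lambda>h. cnj (frechet_derivative f (at x) h))"
    if "x \<in> U" for x
  proof -
    have "f differentiable (at x)" using Suc.prems that by auto
    then have "(f has_derivative frechet_derivative f (at x)) (at x)"
      by (simp_all add: frechet_derivative_works)
    from has_derivative_cnj[OF this] show ?thesis by (rule frechet_derivative_at[symmetric])
  qed
  have "ah_Ck k U (\<lambda>x. frechet_derivative (\<lambda>x. cnj (f x)) (at x) (axis a 1))" for a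
  proof -
    have "ah_Ck k U (\<lambda>x. cnj (frechet_derivative f (at x) (axis a 1)))"
      using Suc by simp
    then show ?thesis by (rule Ck_transfer[OF Suc.prems(1)]) (simp add: fd)
  qed
  moreover have "\<forall>x\<in>U. (\<lambda>x. cnj (f x)) differentiable (at x)"
    using Suc.prems by (simp add: differentiable_cnj_iff)
  ultimately show ?case by simp
qed

lemma smooth_const[simp]: "ah_smooth U (\<lambda>x. c)"
  unfolding ah_smooth_def using Ck_const by blast
lemma smooth_add: "open U \<Longrightarrow> ah_smooth U f \<Longrightarrow> ah_smooth U g \<Longrightarrow> ah_smooth U (\<lambda>x. f x + g x)"
  unfolding ah_smooth_def using Ck_add by blast
lemma smooth_mult: "open U \<Longrightarrow> ah_smooth U f \<Longrightarrow> ah_smooth U g \<Longrightarrow> ah_smooth U (\<lambda>x. f x * g x)"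
  unfolding ah_smooth_def using Ck_mult by blast
lemma smooth_cnj: "open U \<Longrightarrow> ah_smooth U f \<Longrightarrow> ah_smooth U (\<lambda>x. cnj (f x))"
  unfolding ah_smooth_def using Ck_cnj by blast
lemma smooth_minus: "open U \<Longrightarrow> ah_smooth U f \<Longrightarrow> ah_smooth U g \<Longrightarrow> ah_smooth U (\<lambda>x. f x - g x)"
proof -
  assume a: "open U" "ah_smooth U f" "ah_smooth U g"
  have "ah_smooth U (\<lambda>x. f x + (-1) * g x)" using a by (intro smooth_add smooth_mult) auto
  then show ?thesis by simp
qed
lemma smooth_sum:
  assumes "open U" "finite S" "\<And>i. i \<in> S \<Longrightarrow> ah_smooth U (f i)"
  shows "ah_smooth U (\<lambda>x. \<Sum>i\<in>S. f i x)"
  using assms(2,3)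
proof (induction S rule: finite_induct)
  case empty then show ?case by simp
next
  case (insert a S) then show ?case by (simp add: smooth_add assms(1))
qed




lemma vcnj_nth[simp]: "vcnj v $ c = cnj (v $ c)" unfolding vcnj_def by simp
lemma fcnj_nth[simp]: "fcnj X x $ c = cnj (X x $ c)" unfolding fcnj_def by simp
lemma vcnj_vcnj[simp]: "vcnj (vcnj v) = v" by (simp add: vec_eq_iff)
lemma vcnj_zero[simp]: "vcnj 0 = 0" by (simp add: vec_eq_iff)
lemma vcnj_eq_0[simp]: "vcnj v = 0 \<longleftrightarrow> v = 0" by (metis vcnj_vcnj vcnj_zero)
lemma vcnj_add: "vcnj (v + w) = vcnj v + vcnj w" by (simp add: vec_eq_iff)
lemma vcnj_diff: "vcnj (v - w) = vcnj v - vcnj w" by (simp add: vec_eq_iff)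
lemma vcnj_scale: "vcnj (c *s v) = cnj c *s vcnj v" by (simp add: vec_eq_iff)
lemma vcnj_sum: "vcnj (\<Sum>i\<in>S. f i) = (\<Sum>i\<in>S. vcnj (f i))"
  by (induction S rule: infinite_finite_induct) (simp_all add: vcnj_add)

lemma fd_add:
  assumes "f differentiable (at x)" "g differentiable (at x)"
  shows "frechet_derivative (\<lambda>y. f y + g y) (at x) = (\<lambda>h. frechet_derivative f (at x) h + frechet_derivative g (at x) h)"
proof -
  from assms have "(f has_derivative frechet_derivative f (at x)) (at x)" "(g has_derivative frechet_derivative g (at x)) (at x)"
    by (simp_all add: frechet_derivative_works)
  from has_derivative_add[OF this] show ?thesis by (rule frechet_derivative_at[symmetric])
qed

lemma fd_diff:
  fixes f g :: "real^'m \<Rightarrow> complex"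
  assumes "f differentiable (at x)" "g differentiable (at x)"
  shows "frechet_derivative (\<lambda>y. f y - g y) (at x) = (\<lambda>h. frechet_derivative f (at x) h - frechet_derivative g (at x) h)"
proof -
  from assms have "(f has_derivative frechet_derivative f (at x)) (at x)" "(g has_derivative frechet_derivative g (at x)) (at x)"
    by (simp_all add: frechet_derivative_works)
  from has_derivative_diff[OF this] show ?thesis by (rule frechet_derivative_at[symmetric])
qed

lemma fd_mult:
  fixes f g :: "real^'m \<Rightarrow> complex"
  assumes "f differentiable (at x)" "g differentiable (at x)"
  shows "frechet_derivative (\<lambda>y. f y * g y) (at x) = (\<lambda>h. f x * frechet_derivative g (at x) h + frechet_derivative f (at x) h * g x)"
proof -
  from assms have "(f has_derivative frechet_derivative f (at x)) (at x)" "(g has_derivative frechet_derivative g (at x)) (at x)"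
    by (simp_all add: frechet_derivative_works)
  from has_derivative_mult[OF this] show ?thesis by (rule frechet_derivative_at[symmetric])
qed

lemma fd_cnj:
  fixes f :: "real^'m \<Rightarrow> complex"
  assumes "f differentiable (at x)"
  shows "frechet_derivative (\<lambda>y. cnj (f y)) (at x) = (\<lambda>h. cnj (frechet_derivative f (at x) h))"
proof -
  from assms have "(f has_derivative frechet_derivative f (at x)) (at x)"
    by (simp_all add: frechet_derivative_works)
  from has_derivative_cnj[OF this] show ?thesis by (rule frechet_derivative_at[symmetric])
qed

lemma fd_const: "frechet_derivative (\<lambda>y. c) (at x) = (\<lambda>h. 0)"
  by (rule frechet_derivative_at[symmetric]) simp

lemma dirc_add:
  assumes "f differentiable (at x)" "g differentiable (at x)"
  shows "ah_dirc v (\<lambda>y. f y + g y) x = ah_dirc v f x + ah_dirc v g x"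
  unfolding ah_dirc_def fd_add[OF assms] by (simp add: distrib_left sum.distrib)

lemma dirc_diff:
  assumes "f differentiable (at x)" "g differentiable (at x)"
  shows "ah_dirc v (\<lambda>y. f y - g y) x = ah_dirc v f x - ah_dirc v g x"
  unfolding ah_dirc_def fd_diff[OF assms] by (simp add: right_diff_distrib sum_subtractf)

lemma dirc_mult:
  assumes "f differentiable (at x)" "g differentiable (at x)"
  shows "ah_dirc v (\<lambda>y. f y * g y) x = f x * ah_dirc v g x + ah_dirc v f x * g x"
  unfolding ah_dirc_def fd_mult[OF assms]
  by (simp add: distrib_left sum.distrib sum_distrib_left sum_distrib_right mult_ac)

lemma dirc_cmult:
  assumes "f differentiable (at x)"
  shows "ah_dirc v (\<lambda>y. c * f y) x = c * ah_dirc v f x"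
  using dirc_mult[of "\<lambda>y. c" x f v] assms unfolding ah_dirc_def by (simp add: fd_const)

lemma dirc_cnj:
  assumes "f differentiable (at x)"
  shows "ah_dirc (vcnj v) (\<lambda>y. cnj (f y)) x = cnj (ah_dirc v f x)"
  unfolding ah_dirc_def fd_cnj[OF assms] by simp

lemma dirc_const: "ah_dirc v (\<lambda>y. c) x = 0"
  unfolding ah_dirc_def fd_const by simp

lemma dirc_cong:
  assumes "open U" "x \<in> U" "\<And>y. y \<in> U \<Longrightarrow> f y = g y"
  shows "ah_dirc v f x = ah_dirc v g x"
  unfolding ah_dirc_def using fd_cong[OF assms] by simp

lemma dirc_v0[simp]: "ah_dirc 0 f x = 0" unfolding ah_dirc_def by simp

lemma dirc_sum:
  assumes "finite S" "\<And>i. i \<in> S \<Longrightarrow> f i differentiable (at x)"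
  shows "ah_dirc v (\<lambda>y. \<Sum>i\<in>S. f i y) x = (\<Sum>i\<in>S. ah_dirc v (f i) x)"
  using assms
proof (induction S rule: finite_induct)
  case empty then show ?case by (simp add: dirc_const)
next
  case (insert a S)
  have "(\<lambda>y. \<Sum>i\<in>S. f i y) differentiable (at x)"
    using insert by (intro differentiable_sum) auto
  then show ?case using insert by (simp add: dirc_add)
qed

lemma dirv_nth[simp]: "ah_dirv v Y x $ c = ah_dirc v (\<lambda>y. Y y $ c) x"
  unfolding ah_dirv_def by simp

lemma dirv_v0[simp]: "ah_dirv 0 Y x = 0" by (simp add: vec_eq_iff)

lemma dirv_cong:
  assumes "open U" "x \<in> U" "\<And>y. y \<in> U \<Longrightarrow> Y y = Z y"
  shows "ah_dirv v Y x = ah_dirv v Z x"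
proof -
  have "ah_dirc v (\<lambda>y. Y y $ c) x = ah_dirc v (\<lambda>y. Z y $ c) x" for c
    by (rule dirc_cong[OF assms(1,2)]) (simp add: assms(3))
  then show ?thesis by (simp add: vec_eq_iff)
qed

definition vdiff :: "(real^'m \<Rightarrow> complex^'m) \<Rightarrow> real^'m \<Rightarrow> bool" where
  "vdiff Y x \<longleftrightarrow> (\<forall>c. (\<lambda>y. Y y $ c) differentiable (at x))"

lemma dirv_add:
  "vdiff Y x \<Longrightarrow> vdiff Z x \<Longrightarrow> ah_dirv v (\<lambda>y. Y y + Z y) x = ah_dirv v Y x + ah_dirv v Z x"
  unfolding vdiff_def by (simp add: vec_eq_iff dirc_add)

lemma dirv_diff:
  "vdiff Y x \<Longrightarrow> vdiff Z x \<Longrightarrow> ah_dirv v (\<lambda>y. Y y - Z y) x = ah_dirv v Y x - ah_dirv v Z x"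
  unfolding vdiff_def by (simp add: vec_eq_iff dirc_diff)

lemma dirv_scale:
  "vdiff Y x \<Longrightarrow> ah_dirv v (\<lambda>y. c *s Y y) x = c *s ah_dirv v Y x"
  unfolding vdiff_def by (simp add: vec_eq_iff dirc_cmult)

lemma dirv_cnj:
  "vdiff Y x \<Longrightarrow> ah_dirv (vcnj v) (fcnj Y) x = vcnj (ah_dirv v Y x)"
  unfolding vdiff_def by (simp add: vec_eq_iff dirc_cnj)

lemma nablav_cong:
  assumes "open U" "x \<in> U" "\<And>y. y \<in> U \<Longrightarrow> Y y = Z y"
  shows "nablav Gam x v Y = nablav Gam x v Z"
  unfolding nablav_def using dirv_cong[OF assms] assms by simp

lemma nablav_v0[simp]: "nablav Gam x 0 Y = 0"
  unfolding nablav_def by (simp add: vec_eq_iff)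

lemma nablav_scale:
  "vdiff Y x \<Longrightarrow> nablav Gam x v (\<lambda>y. c *s Y y) = c *s nablav Gam x v Y"
  unfolding nablav_def
  by (simp add: dirv_scale vec_eq_iff sum_distrib_left mult_ac distrib_left)

lemma nablav_cnj:
  "vdiff Y x \<Longrightarrow> nablav Gam x (vcnj v) (fcnj Y) = vcnj (nablav Gam x v Y)"
  unfolding nablav_def
  by (simp add: dirv_cnj vcnj_add vec_eq_iff cnj_sum)

lemma nablav_Y0: "Y x = 0 \<Longrightarrow> nablav Gam x v Y = ah_dirv v Y x"
  unfolding nablav_def by (simp add: vec_eq_iff)




lemma Jc_nth: "Jc J x v $ c = (\<Sum>b\<in>UNIV. complex_of_real (J x $ c $ b) * v $ b)"
  unfolding Jc_def by simp
lemma Jc_add: "Jc J x (v + w) = Jc J x v + Jc J x w"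
  by (simp add: Jc_nth vec_eq_iff distrib_left sum.distrib)
lemma Jc_diff: "Jc J x (v - w) = Jc J x v - Jc J x w"
  by (simp add: Jc_nth vec_eq_iff right_diff_distrib sum_subtractf)
lemma Jc_scale: "Jc J x (c *s v) = c *s Jc J x v"
  by (simp add: Jc_nth vec_eq_iff sum_distrib_left mult_ac)
lemma Jc_zero[simp]: "Jc J x 0 = 0"
  by (simp add: Jc_nth vec_eq_iff)
lemma Jc_sum: "Jc J x (\<Sum>i\<in>S. f i) = (\<Sum>i\<in>S. Jc J x (f i))"
  by (induction S rule: infinite_finite_induct) (simp_all add: Jc_add)
lemma Jc_cnj: "Jc J x (vcnj v) = vcnj (Jc J x v)"
  by (simp add: Jc_nth vec_eq_iff cnj_sum)

lemma Jc_Jc: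
  assumes JJ: "J x ** J x = - mat 1"
  shows "Jc J x (Jc J x v) = - v"
proof -
  have h: "(\<Sum>b\<in>UNIV. J x $ c $ b * J x $ b $ d) = (if c = d then -1 else 0)" for c d
  proof -
    have "(J x ** J x) $ c $ d = (- mat 1 :: real^'a^'a) $ c $ d" using JJ by simp
    then show ?thesis by (simp add: matrix_matrix_mult_def mat_def)
  qed
  have "Jc J x (Jc J x v) $ c = - v $ c" for c
  proof -
    have "Jc J x (Jc J x v) $ c = (\<Sum>b\<in>UNIV. \<Sum>d\<in>UNIV. complex_of_real (J x $ c $ b) * (complex_of_real (J x $ b $ d) * v $ d))"
      by (simp add: Jc_nth sum_distrib_left)
    also have "\<dots> = (\<Sum>d\<in>UNIV. \<Sum>b\<in>UNIV. complex_of_real (J x $ c $ b * J x $ b $ d) * v $ d)"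
      by (subst sum.swap) (simp add: mult_ac)
    also have "\<dots> = (\<Sum>d\<in>UNIV. complex_of_real (\<Sum>b\<in>UNIV. J x $ c $ b * J x $ b $ d) * v $ d)"
      by (simp add: sum_distrib_right)
    also have "\<dots> = (\<Sum>d\<in>UNIV. (if c = d then - v $ d else 0))"
      by (intro sum.cong) (auto simp: h)
    also have "\<dots> = - v $ c" by simp
    finally show ?thesis .
  qed
  then show ?thesis by (simp add: vec_eq_iff)
qed

lemma proj10_add: "proj10 J x (v + w) = proj10 J x v + proj10 J x w"
  unfolding proj10_def by (simp add: Jc_add vector_ssub_ldistrib vector_sadd_rdistrib algebra_simps)
lemma proj10_diff: "proj10 J x (v - w) = proj10 J x v - proj10 J x w"
  unfolding proj10_def by (simp add: Jc_diff vec_eq_iff algebra_simps)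
lemma proj10_scale: "proj10 J x (c *s v) = c *s proj10 J x v"
  unfolding proj10_def by (simp add: Jc_scale vec_eq_iff algebra_simps)
lemma proj10_neg: "proj10 J x (- v) = - proj10 J x v"
  using proj10_scale[of J x "-1" v] by (simp add: vec_eq_iff)
lemma proj10_10: "Jc J x w = \<i> *s w \<Longrightarrow> proj10 J x w = w"
  unfolding proj10_def by (simp add: vec_eq_iff algebra_simps)
lemma proj10_01: "Jc J x w = - \<i> *s w \<Longrightarrow> proj10 J x w = 0"
  unfolding proj10_def by (simp add: vec_eq_iff algebra_simps)
lemma proj10_is10: "J x ** J x = - mat 1 \<Longrightarrow> Jc J x (proj10 J x v) = \<i> *s proj10 J x v"
  unfolding proj10_def by (simp add: Jc_scale Jc_diff Jc_Jc vec_eq_iff algebra_simps)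
lemma proj10_decomp: "v = proj10 J x v + vcnj (proj10 J x (vcnj v))"
  unfolding proj10_def by (simp add: Jc_cnj vec_eq_iff algebra_simps)




lemma gc_add_left: "gc g x (v + w) z = gc g x v z + gc g x w z"
  unfolding gc_def by (simp add: distrib_right sum.distrib)
lemma gc_add_right: "gc g x z (v + w) = gc g x z v + gc g x z w"
  unfolding gc_def by (simp add: distrib_left sum.distrib)
lemma gc_diff_left: "gc g x (v - w) z = gc g x v z - gc g x w z"
  unfolding gc_def by (simp add: left_diff_distrib sum_subtractf)
lemma gc_diff_right: "gc g x z (v - w) = gc g x z v - gc g x z w"
  unfolding gc_def by (simp add: right_diff_distrib sum_subtractf)
lemma gc_scale_left: "gc g x (c *s v) z = c * gc g x v z"
  unfolding gc_def by (simp add: sum_distrib_left mult_ac)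
lemma gc_scale_right: "gc g x z (c *s v) = c * gc g x z v"
  unfolding gc_def by (simp add: sum_distrib_left mult_ac)
lemma gc_neg_left: "gc g x (- v) z = - gc g x v z"
  unfolding gc_def by (simp add: sum_negf)
lemma gc_neg_right: "gc g x z (- v) = - gc g x z v"
  unfolding gc_def by (simp add: sum_negf)
lemma gc_zero_left[simp]: "gc g x 0 z = 0" unfolding gc_def by simp
lemma gc_zero_right[simp]: "gc g x z 0 = 0" unfolding gc_def by simp
lemma gc_sum_left: "gc g x (\<Sum>i\<in>S. f i) z = (\<Sum>i\<in>S. gc g x (f i) z)"
  by (induction S rule: infinite_finite_induct) (simp_all add: gc_add_left)
lemma gc_sum_right: "gc g x z (\<Sum>i\<in>S. f i) = (\<Sum>i\<in>S. gc g x z (f i))"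
  by (induction S rule: infinite_finite_induct) (simp_all add: gc_add_right)

lemma sum4_swap:
  "(\<Sum>a\<in>A. \<Sum>b\<in>B. \<Sum>c\<in>C. \<Sum>d\<in>D. F a b c d) = (\<Sum>c\<in>C. \<Sum>d\<in>D. \<Sum>a\<in>A. \<Sum>b\<in>B. F a b c d)"
proof -
  have "(\<Sum>a\<in>A. \<Sum>b\<in>B. \<Sum>c\<in>C. \<Sum>d\<in>D. F a b c d) = (\<Sum>a\<in>A. \<Sum>c\<in>C. \<Sum>b\<in>B. \<Sum>d\<in>D. F a b c d)"
    by (rule sum.cong[OF refl], rule sum.swap)
  also have "\<dots> = (\<Sum>c\<in>C. \<Sum>a\<in>A. \<Sum>b\<in>B. \<Sum>d\<in>D. F a b c d)"
    by (rule sum.swap)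
  also have "\<dots> = (\<Sum>c\<in>C. \<Sum>a\<in>A. \<Sum>d\<in>D. \<Sum>b\<in>B. F a b c d)"
    by (rule sum.cong[OF refl], rule sum.cong[OF refl], rule sum.swap)
  also have "\<dots> = (\<Sum>c\<in>C. \<Sum>d\<in>D. \<Sum>a\<in>A. \<Sum>b\<in>B. F a b c d)"
    by (rule sum.cong[OF refl], rule sum.swap)
  finally show ?thesis .
qed

lemma gc_J:
  fixes J g :: "real^'m \<Rightarrow> real^'m^'m"
  assumes H: "\<forall>v w. (J x *v v) \<bullet> (g x *v (J x *v w)) = v \<bullet> (g x *v w)"
  shows "gc g x (Jc J x v) (Jc J x w) = gc g x v w"
proof -
  have h: "(\<Sum>a\<in>UNIV. \<Sum>b\<in>UNIV. J x $ a $ c * g x $ a $ b * J x $ b $ d) = g x $ c $ d" for c d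
  proof -
    have "(J x *v axis c 1) \<bullet> (g x *v (J x *v axis d 1)) = axis c 1 \<bullet> (g x *v axis d 1)"
      using H by blast
    then have "column c (J x) \<bullet> (g x *v column d (J x)) = (g x *v axis d 1) $ c"
      by (simp only: matrix_vector_mult_basis inner_axis') simp
    then have "column c (J x) \<bullet> (g x *v column d (J x)) = g x $ c $ d"
      by (simp only: matrix_vector_mult_basis) (simp add: column_def)
    then show ?thesis
      by (simp add: column_def inner_vec_def matrix_vector_mult_def
          sum_distrib_left sum_distrib_right mult_ac)
  qed
  have "gc g x (Jc J x v) (Jc J x w) =
     (\<Sum>a\<in>UNIV. \<Sum>b\<in>UNIV. \<Sum>c\<in>UNIV. \<Sum>d\<in>UNIV. v $ c * (complex_of_real (J x $ a $ c * g x $ a $ b * J x $ b $ d)) * w $ d)"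
    unfolding gc_def Jc_nth by (simp add: sum_distrib_left sum_distrib_right mult_ac)
  also have "\<dots> = (\<Sum>c\<in>UNIV. \<Sum>d\<in>UNIV. \<Sum>a\<in>UNIV. \<Sum>b\<in>UNIV. v $ c * (complex_of_real (J x $ a $ c * g x $ a $ b * J x $ b $ d)) * w $ d)"
    by (rule sum4_swap)
  also have "\<dots> = (\<Sum>c\<in>UNIV. \<Sum>d\<in>UNIV. v $ c * complex_of_real (\<Sum>a\<in>UNIV. \<Sum>b\<in>UNIV. J x $ a $ c * g x $ a $ b * J x $ b $ d) * w $ d)"
    by (simp add: sum_distrib_left sum_distrib_right)
  also have "\<dots> = gc g x v w" unfolding gc_def h ..
  finally show ?thesis .
qed

lemma gc_pos:
  fixes g :: "real^'m \<Rightarrow> real^'m^'m"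
  assumes P: "\<forall>v. v \<noteq> 0 \<longrightarrow> v \<bullet> (g x *v v) > 0" and v: "v \<noteq> 0"
  shows "gc g x (vcnj v) v \<noteq> 0"
proof -
  define a where "a = (\<chi> c. Re (v $ c))"
  define b where "b = (\<chi> c. Im (v $ c))"
  have "Re (gc g x (vcnj v) v) = a \<bullet> (g x *v a) + b \<bullet> (g x *v b)"
    unfolding gc_def a_def b_def
    by (simp add: Re_sum inner_vec_def matrix_vector_mult_def sum_distrib_left sum.distrib[symmetric] algebra_simps)
  moreover have "a \<noteq> 0 \<or> b \<noteq> 0"
    using v unfolding a_def b_def by (auto simp: vec_eq_iff complex_eq_iff)
  moreover have "a \<bullet> (g x *v a) \<ge> 0" "b \<bullet> (g x *v b) \<ge> 0"
    using P by (metis inner_zero_left less_eq_real_def)+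
  ultimately have "Re (gc g x (vcnj v) v) > 0"
    using P by (smt (verit))
  then show ?thesis by auto
qed




locale AHC =
  fixes U :: "(real^'m) set" and J g :: "real^'m \<Rightarrow> real^'m^'m"
    and Gam :: "real^'m \<Rightarrow> 'm \<Rightarrow> 'm \<Rightarrow> 'm \<Rightarrow> real"
  assumes AH: "almost_hermitian U J g" and CC: "canonical_connection U J g Gam"
begin

lemma opU: "open U" using AH unfolding almost_hermitian_def by blast
lemma Jsm: "ah_smooth U (\<lambda>x. complex_of_real (J x $ a $ b))" using AH unfolding almost_hermitian_def by blast
lemma gsm: "ah_smooth U (\<lambda>x. complex_of_real (g x $ a $ b))" using AH unfolding almost_hermitian_def by blast
lemma JJ: "x \<in> U \<Longrightarrow> J x ** J x = - mat 1" using AH unfolding almost_hermitian_def by blast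
lemma gpos: "x \<in> U \<Longrightarrow> \<forall>v. v \<noteq> 0 \<longrightarrow> v \<bullet> (g x *v v) > 0" using AH unfolding almost_hermitian_def by blast
lemma gJ: "x \<in> U \<Longrightarrow> \<forall>v w. (J x *v v) \<bullet> (g x *v (J x *v w)) = v \<bullet> (g x *v w)"
  using AH unfolding almost_hermitian_def by blast
lemma Gsm: "ah_smooth U (\<lambda>x. complex_of_real (Gam x a b c))" using CC unfolding canonical_connection_def by blast
lemma metric: "ah_field U Y \<Longrightarrow> ah_field U Z \<Longrightarrow> x \<in> U \<Longrightarrow>
        ah_dirc v (\<lambda>y. gc g y (Y y) (Z y)) x =
        gc g x (nablav Gam x v Y) (Z x) + gc g x (Y x) (nablav Gam x v Z)"
  using CC unfolding canonical_connection_def by blast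
lemma nablaJ: "ah_field U Y \<Longrightarrow> x \<in> U \<Longrightarrow>
        nablav Gam x v (\<lambda>y. Jc J y (Y y)) = Jc J x (nablav Gam x v Y)"
  using CC unfolding canonical_connection_def by blast
lemma tors: "field10 U J X \<Longrightarrow> field10 U J Y \<Longrightarrow> x \<in> U \<Longrightarrow> torsion Gam X (fcnj Y) x = 0"
  using CC unfolding canonical_connection_def by blast

lemma gcJ: "x \<in> U \<Longrightarrow> gc g x (Jc J x v) (Jc J x w) = gc g x v w"
  by (rule gc_J[OF gJ])

lemma gc_10: "x \<in> U \<Longrightarrow> Jc J x v = \<i> *s v \<Longrightarrow> Jc J x w = \<i> *s w \<Longrightarrow> gc g x v w = 0"
  using gcJ[of x v w] by (simp add: gc_scale_left gc_scale_right gc_neg_left gc_neg_right)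
lemma gc_01: "x \<in> U \<Longrightarrow> Jc J x v = (- \<i>) *s v \<Longrightarrow> Jc J x w = (- \<i>) *s w \<Longrightarrow> gc g x v w = 0"
  using gcJ[of x v w] by (simp add: gc_scale_left gc_scale_right gc_neg_left gc_neg_right)

lemma gc_posU: "x \<in> U \<Longrightarrow> v \<noteq> 0 \<Longrightarrow> gc g x (vcnj v) v \<noteq> 0"
  by (rule gc_pos[OF gpos])

lemma field_nth: "ah_field U Y \<Longrightarrow> ah_smooth U (\<lambda>x. Y x $ c)"
  unfolding ah_field_def by blast
lemma field_intro: "(\<And>c. ah_smooth U (\<lambda>x. Y x $ c)) \<Longrightarrow> ah_field U Y"
  unfolding ah_field_def by blast
lemma field_vdiff: "ah_field U Y \<Longrightarrow> x \<in> U \<Longrightarrow> vdiff Y x"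
  unfolding vdiff_def using field_nth smooth_diff by blast
lemma smooth_cong': "ah_smooth U f \<Longrightarrow> (\<And>y. y \<in> U \<Longrightarrow> h y = f y) \<Longrightarrow> ah_smooth U h"
  using smooth_cong[OF opU] by blast

lemma smooth_dirc: "ah_field U X \<Longrightarrow> ah_smooth U f \<Longrightarrow> ah_smooth U (\<lambda>x. ah_dirc (X x) f x)"
  unfolding ah_dirc_def
  using smooth_D[of U f, unfolded Dp_def]
  by (intro smooth_sum[OF opU] smooth_mult[OF opU] field_nth) auto

lemma field_dirv: "ah_field U X \<Longrightarrow> ah_field U Y \<Longrightarrow> ah_field U (\<lambda>x. ah_dirv (X x) Y x)"
  by (intro field_intro) (simp add: smooth_dirc field_nth)

lemma field_add: "ah_field U X \<Longrightarrow> ah_field U Y \<Longrightarrow> ah_field U (\<lambda>x. X x + Y x)"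
  by (intro field_intro) (simp add: smooth_add[OF opU] field_nth)
lemma field_diff: "ah_field U X \<Longrightarrow> ah_field U Y \<Longrightarrow> ah_field U (\<lambda>x. X x - Y x)"
  by (intro field_intro) (simp add: smooth_minus[OF opU] field_nth)
lemma field_scale: "ah_field U X \<Longrightarrow> ah_field U (\<lambda>x. c *s X x)"
  by (intro field_intro) (simp add: smooth_mult[OF opU] field_nth)
lemma field_fcnj: "ah_field U X \<Longrightarrow> ah_field U (fcnj X)"
  by (intro field_intro) (simp add: smooth_cnj[OF opU] field_nth)

lemma field_nabla: "ah_field U X \<Longrightarrow> ah_field U Y \<Longrightarrow> ah_field U (nabla Gam X Y)"
  unfolding nabla_def nablav_def
  apply (intro field_intro)
  apply (simp add: smooth_dirc field_nth)
  apply (intro smooth_add[OF opU] smooth_dirc smooth_sum[OF opU] smooth_mult[OF opU] field_nth Gsm)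
  by auto

lemma field_lie: "ah_field U X \<Longrightarrow> ah_field U Y \<Longrightarrow> ah_field U (ah_lie X Y)"
  unfolding ah_lie_def by (intro field_diff field_dirv)

lemma field_Jc: "ah_field U X \<Longrightarrow> ah_field U (\<lambda>x. Jc J x (X x))"
  unfolding Jc_def
  by (intro field_intro) (simp, intro smooth_sum[OF opU] smooth_mult[OF opU] field_nth Jsm, auto)

lemma field_proj10: "ah_field U X \<Longrightarrow> ah_field U (\<lambda>x. proj10 J x (X x))"
  unfolding proj10_def by (intro field_scale field_diff field_Jc) auto

lemma smooth_gc: "ah_field U X \<Longrightarrow> ah_field U Y \<Longrightarrow> ah_smooth U (\<lambda>x. gc g x (X x) (Y x))"
  unfolding gc_def
  by (intro smooth_sum[OF opU] smooth_mult[OF opU] field_nth gsm) auto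

end



lemma dirc_vdiff: "ah_dirc (v - w) f x = ah_dirc v f x - ah_dirc w f x"
  unfolding ah_dirc_def by (simp add: left_diff_distrib sum_subtractf)
lemma dirv_vdiff: "ah_dirv (v - w) Y x = ah_dirv v Y x - ah_dirv w Y x"
  by (simp add: vec_eq_iff dirc_vdiff)

lemma lie_swap: "ah_lie X Y x = - ah_lie Y X x"
  unfolding ah_lie_def by simp

context AHC begin

lemma f10_field: "field10 U J X \<Longrightarrow> ah_field U X" unfolding field10_def by blast
lemma f10_J: "field10 U J X \<Longrightarrow> x \<in> U \<Longrightarrow> Jc J x (X x) = \<i> *s X x" unfolding field10_def by blast
lemma f10_Jbar: "field10 U J X \<Longrightarrow> x \<in> U \<Longrightarrow> Jc J x (fcnj X x) = (- \<i>) *s fcnj X x"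
  using f10_J[of X x] unfolding fcnj_def by (simp add: Jc_cnj vcnj_scale)

lemma nab_eigen:
  assumes W: "ah_field U W" and E: "\<And>y. y \<in> U \<Longrightarrow> Jc J y (W y) = c *s W y" and x: "x \<in> U"
  shows "Jc J x (nablav Gam x v W) = c *s nablav Gam x v W"
proof -
  have "Jc J x (nablav Gam x v W) = nablav Gam x v (\<lambda>y. Jc J y (W y))"
    using nablaJ[OF W x] by simp
  also have "\<dots> = nablav Gam x v (\<lambda>y. c *s W y)"
    by (rule nablav_cong[OF opU x]) (simp add: E)
  also have "\<dots> = c *s nablav Gam x v W"
    by (rule nablav_scale[OF field_vdiff[OF W x]])
  finally show ?thesis .
qed

lemma nabla_bar:
  assumes X: "field10 U J X" and Y: "field10 U J Y" and x: "x \<in> U"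
  shows "nabla Gam (fcnj X) Y x = proj10 J x (ah_lie (fcnj X) Y x)"
proof -
  have t: "nabla Gam Y (fcnj X) x - nabla Gam (fcnj X) Y x - ah_lie Y (fcnj X) x = 0"
    using tors[OF Y X x] unfolding torsion_def .
  have e1: "proj10 J x (nabla Gam (fcnj X) Y x) = nabla Gam (fcnj X) Y x"
    unfolding nabla_def
    by (rule proj10_10, rule nab_eigen[OF f10_field[OF Y] f10_J[OF Y] x])
  have e2: "proj10 J x (nabla Gam Y (fcnj X) x) = 0"
    unfolding nabla_def
    by (rule proj10_01, simp, rule nab_eigen[OF field_fcnj[OF f10_field[OF X]] f10_Jbar[OF X] x, simplified])
  have "nabla Gam (fcnj X) Y x = nabla Gam Y (fcnj X) x + ah_lie (fcnj X) Y x"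
    using t lie_swap[of Y "fcnj X" x] by (simp add: algebra_simps)
  then have "proj10 J x (nabla Gam (fcnj X) Y x) = proj10 J x (nabla Gam Y (fcnj X) x) + proj10 J x (ah_lie (fcnj X) Y x)"
    by (simp add: proj10_add)
  then show ?thesis using e1 e2 by simp
qed

end

locale AHF = AHC U J g Gam
  for U :: "(real^'m) set" and J g :: "real^'m \<Rightarrow> real^'m^'m"
    and Gam :: "real^'m \<Rightarrow> 'm \<Rightarrow> 'm \<Rightarrow> 'm \<Rightarrow> real" +
  fixes e :: "'n::finite \<Rightarrow> real^'m \<Rightarrow> complex^'m" and p :: "real^'m"
  assumes dim: "CARD('m) = 2 * CARD('n)"
    and pU: "p \<in> U"
    and fr: "frame10 U J e"
    and ph: "\<forall>i. pseudo_hol U J (e i) p"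
begin

lemma e10: "field10 U J (e i)" using fr unfolding frame10_def by blast
lemma ef: "ah_field U (e i)" using f10_field[OF e10] .
lemma efb: "ah_field U (fcnj (e i))" using field_fcnj[OF ef] .
lemma e_indep: "x \<in> U \<Longrightarrow> (\<Sum>i\<in>UNIV. c i *s e i x) = 0 \<Longrightarrow> c i = 0"
  using fr unfolding frame10_def by blast
lemma ph_e: "field10 U J X \<Longrightarrow> proj10 J p (ah_lie (fcnj X) (e i) p) = 0"
  using ph unfolding pseudo_hol_def by blast

lemma vecA: "nabla Gam (fcnj (e j)) (e k) p = 0"
  using nabla_bar[OF e10 e10 pU] ph_e[OF e10] by simp

lemma vecB: "nabla Gam (e j) (fcnj (e k)) p = 0"
proof -
  have "nabla Gam (e j) (fcnj (e k)) p = nablav Gam p (vcnj (fcnj (e j) p)) (fcnj (e k))"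
    unfolding nabla_def fcnj_def by simp
  also have "\<dots> = vcnj (nablav Gam p (fcnj (e j) p) (e k))"
    by (rule nablav_cnj[OF field_vdiff[OF ef pU]])
  also have "\<dots> = 0" using vecA[of j k] unfolding nabla_def by simp
  finally show ?thesis .
qed

lemma vecC: "ah_lie (e j) (fcnj (e k)) p = 0"
  using tors[OF e10 e10 pU, of j k] vecA[of k j] vecB[of j k] unfolding torsion_def by simp

lemma partf:
  assumes q: "\<forall>i. quasi_hol U J (e i) p"
  shows "nabla Gam (e i) (nabla Gam (fcnj (e j)) (e k)) p = 0"
proof -
  define Z where "Z = nabla Gam (fcnj (e j)) (e k)"
  define L where "L = ah_lie (fcnj (e j)) (e k)"
  define P where "P = (\<lambda>y. proj10 J y (L y))"
  define V where "V = (\<lambda>y. proj10 J y (vcnj (L y)))"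
  have Lf: "ah_field U L" unfolding L_def by (intro field_lie efb ef)
  have Vf: "ah_field U V" unfolding V_def
    using field_proj10[OF field_fcnj[OF Lf]] unfolding fcnj_def .
  have V10: "field10 U J V" unfolding field10_def using Vf JJ proj10_is10 V_def by blast
  have ZP: "Z y = P y" if "y \<in> U" for y
    unfolding Z_def P_def L_def using nabla_bar[OF e10 e10 that] .
  have Zf: "ah_field U Z" unfolding Z_def by (intro field_nabla efb ef)
  have ZJ: "Jc J y (Z y) = \<i> *s Z y" if "y \<in> U" for y
    using ZP[OF that] proj10_is10[of J y, OF JJ[OF that]] unfolding P_def by simp
  have Zp: "Z p = 0" unfolding Z_def by (rule vecA)
  have PLV: "P y = L y - fcnj V y" for y
    using proj10_decomp[of "L y" J y] unfolding P_def V_def fcnj_def by (simp add: algebra_simps)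
  have "nabla Gam (e i) Z p = ah_dirv (e i p) Z p"
    unfolding nabla_def using nablav_Y0[of Z p, OF Zp] .
  also have "\<dots> = ah_dirv (e i p) P p"
    by (rule dirv_cong[OF opU pU]) (simp add: ZP)
  also have "\<dots> = ah_dirv (e i p) L p - ah_dirv (e i p) (fcnj V) p"
    unfolding PLV using dirv_diff[OF field_vdiff[OF Lf pU] field_vdiff[OF field_fcnj[OF Vf] pU]] by simp
  also have "\<dots> = ah_lie (e i) L p + ah_lie (fcnj V) (e i) p + ah_dirv (P p) (e i) p"
    unfolding ah_lie_def PLV dirv_vdiff by simp
  also have "\<dots> = ah_lie (e i) L p + ah_lie (fcnj V) (e i) p"
    using ZP[OF pU] Zp by simp
  finally have N: "nabla Gam (e i) Z p = ah_lie (e i) L p + ah_lie (fcnj V) (e i) p" .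
  have p1: "proj10 J p (ah_lie (e i) L p) = 0"
    using q ph e10 unfolding quasi_hol_def L_def by blast
  have p2: "proj10 J p (ah_lie (fcnj V) (e i) p) = 0"
    using ph_e[OF V10] .
  have "Jc J p (nabla Gam (e i) Z p) = \<i> *s nabla Gam (e i) Z p"
    unfolding nabla_def by (rule nab_eigen[OF Zf ZJ pU])
  then have "nabla Gam (e i) Z p = proj10 J p (nabla Gam (e i) Z p)"
    by (simp add: proj10_10)
  also have "\<dots> = 0" unfolding N proj10_add p1 p2 by simp
  finally show ?thesis unfolding Z_def .
qed

end



lemma sum_Plus_UNIV: "(\<Sum>D\<in>(UNIV::('a::finite + 'b::finite) set). f D) = (\<Sum>i\<in>UNIV. f (Inl i)) + (\<Sum>i\<in>UNIV. f (Inr i))"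
  using sum.Plus[of "UNIV::'a set" "UNIV::'b set" f] by (simp add: o_def)

lemma frameE_Inl[simp]: "frameE e (Inl i) = e i" unfolding frameE_def by simp
lemma frameE_Inr[simp]: "frameE e (Inr i) = fcnj (e i)" unfolding frameE_def by simp

context AHF begin

lemma indepE:
  assumes S: "(\<Sum>D\<in>UNIV. c D *s frameE e D p) = 0"
  shows "c D = 0"
proof -
  define a where "a = (\<Sum>i\<in>UNIV. c (Inl i) *s e i p)"
  define b where "b = (\<Sum>i\<in>UNIV. c (Inr i) *s fcnj (e i) p)"
  have ab: "a + b = 0" using S unfolding a_def b_def sum_Plus_UNIV by simp
  have Ja: "Jc J p a = \<i> *s a"
    unfolding a_def Jc_sum Jc_scale using f10_J[OF e10 pU]
    by (simp add: scalar_mult_eq_scaleR vector_smult_assoc sum_distrib_left vec_eq_iff mult_ac)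
  have Jb: "Jc J p b = (- \<i>) *s b"
    unfolding b_def Jc_sum Jc_scale using f10_Jbar[OF e10 pU]
    by (simp add: vec_eq_iff sum_distrib_left mult_ac sum_negf)
  have "Jc J p (a + b) = 0" using ab by simp
  then have "\<i> *s a - \<i> *s b = 0" unfolding Jc_add Ja Jb by (simp add: vec_eq_iff)
  then have a0: "a = 0" and b0: "b = 0" using ab
    by (auto simp: vec_eq_iff algebra_simps)
  have "c (Inl i) = 0" for i using e_indep[OF pU, of "\<lambda>i. c (Inl i)"] a0 unfolding a_def by blast
  moreover have "c (Inr i) = 0" for i
  proof -
    have "vcnj b = (\<Sum>i\<in>UNIV. cnj (c (Inr i)) *s e i p)"
      unfolding b_def vcnj_sum vcnj_scale fcnj_def by simp
    then have "cnj (c (Inr i)) = 0" using e_indep[OF pU, of "\<lambda>i. cnj (c (Inr i))"] b0 by simp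
    then show ?thesis by simp
  qed
  ultimately show ?thesis by (cases D) auto
qed

lemma injE: "inj (\<lambda>D. frameE e D p)"
proof (rule injI)
  fix D1 D2 assume eq: "frameE e D1 p = frameE e D2 p"
  show "D1 = D2"
  proof (rule ccontr)
    assume ne: "D1 \<noteq> D2"
    define c where "c = (\<lambda>D. if D = D1 then (1::complex) else if D = D2 then -1 else 0)"
    have "(\<Sum>D\<in>UNIV. c D *s frameE e D p) = (\<Sum>D\<in>{D1, D2}. c D *s frameE e D p)"
      by (rule sum.mono_neutral_right) (auto simp: c_def)
    also have "\<dots> = 0" using ne eq by (simp add: c_def vec_eq_iff)
    finally have "c D1 = 0" by (rule indepE)
    then show False by (simp add: c_def)
  qed
qed

lemma spanE: "\<exists>c. w = (\<Sum>D\<in>UNIV. c D *s frameE e D p)"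
proof -
  define B where "B = range (\<lambda>D. frameE e D p)"
  have fB: "finite B" unfolding B_def by simp
  have sB: "(\<Sum>v\<in>B. u v *s v) = (\<Sum>D\<in>UNIV. u (frameE e D p) *s frameE e D p)" for u
    unfolding B_def by (subst sum.reindex[OF injE]) simp
  have "vec.independent B"
    unfolding vec.dependent_finite[OF fB]
  proof
    assume "\<exists>u. (\<exists>v\<in>B. u v \<noteq> 0) \<and> (\<Sum>v\<in>B. u v *s v) = 0"
    then obtain u v where v: "v \<in> B" "u v \<noteq> 0" and s0: "(\<Sum>v\<in>B. u v *s v) = 0" by blast
    from v obtain D where D: "v = frameE e D p" unfolding B_def by blast
    have "u (frameE e D p) = 0" using indepE[of "\<lambda>D. u (frameE e D p)" D] s0 unfolding sB by blast
    then show False using v D by simp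
  qed
  moreover have "card B = vec.dim (UNIV :: (complex^'m) set)"
    unfolding vec_dim_card B_def card_image[OF injE] dim
    using card_Plus[of "UNIV::'n set" "UNIV::'n set"] by simp
  ultimately have "UNIV \<subseteq> vec.span B"
    using vec.card_eq_dim[of B UNIV] fB by blast
  then have "w \<in> range (\<lambda>u. \<Sum>v\<in>B. u v *s v)" unfolding vec.span_finite[OF fB] by blast
  then obtain u where "w = (\<Sum>v\<in>B. u v *s v)" by blast
  then show ?thesis unfolding sB by (intro exI[where x="\<lambda>D. u (frameE e D p)"])
qed

lemma chr_eq:
  assumes "nabla Gam (frameE e A) (frameE e B) p = (\<Sum>D\<in>UNIV. c D *s frameE e D p)"
  shows "chr Gam e A B C p = c C"
proof -
  have "(THE c. nabla Gam (frameE e A) (frameE e B) p = (\<Sum>D\<in>UNIV. c D *s frameE e D p)) = c"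
  proof (rule the_equality)
    fix c' assume c': "nabla Gam (frameE e A) (frameE e B) p = (\<Sum>D\<in>UNIV. c' D *s frameE e D p)"
    have "(\<Sum>D\<in>UNIV. (c' D - c D) *s frameE e D p) = 0"
      using c' assms by (simp add: vec_eq_iff left_diff_distrib sum_subtractf)
    then have "c' D - c D = 0" for D by (rule indepE)
    then show "c' = c" by auto
  qed (rule assms)
  then show ?thesis unfolding chr_def by simp
qed

end



context AHF begin

definition Gm :: "complex^'n^'n" where "Gm = (\<chi> m l. gfr g e m l p)"

lemma Gm_inj: assumes x: "Gm *v x = 0" shows "x = 0"
proof -
  define w where "w = (\<Sum>l\<in>UNIV. x $ l *s vcnj (e l p))"
  have gw: "gc g p (e m p) w = (Gm *v x) $ m" for m
    unfolding w_def Gm_def gfr_def by (simp add: gc_sum_right gc_scale_right matrix_vector_mult_def mult_ac)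
  have vw: "vcnj w = (\<Sum>l\<in>UNIV. cnj (x $ l) *s e l p)"
    unfolding w_def by (simp add: vcnj_sum vcnj_scale)
  have "gc g p (vcnj w) w = (\<Sum>l\<in>UNIV. cnj (x $ l) * gc g p (e l p) w)"
    unfolding vw by (simp add: gc_sum_left gc_scale_left)
  also have "\<dots> = 0" using gw x by simp
  finally have "w = 0" using gc_posU[OF pU] by blast
  then have "(\<Sum>l\<in>UNIV. cnj (x $ l) *s e l p) = 0" using vw by simp
  then have "cnj (x $ l) = 0" for l using e_indep[OF pU, of "\<lambda>l. cnj (x $ l)"] by blast
  then show ?thesis by (simp add: vec_eq_iff)
qed

lemma ginv_props:
  "(\<forall>k m. (\<Sum>l\<in>UNIV. ginv g e p k l * gfr g e m l p) = (if k = m then 1 else 0)) \<and>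
   (\<forall>k m. (\<Sum>l\<in>UNIV. ginv g e p l k * gfr g e l m p) = (if k = m then 1 else 0))"
proof -
  obtain B where BG: "B ** Gm = mat 1"
    using matrix_left_invertible_ker[of Gm] Gm_inj by blast
  have GB: "Gm ** B = mat 1" using BG matrix_left_right_inverse by blast
  have P: "(\<Sum>l\<in>UNIV. B $ l $ k * gfr g e m l p) = (if k = m then 1 else 0)" for k m
  proof -
    have "(Gm ** B) $ m $ k = (mat 1 :: complex^'n^'n) $ m $ k" using GB by simp
    then show ?thesis by (auto simp: matrix_matrix_mult_def mat_def Gm_def mult_ac)
  qed
  have "ginv g e p = (\<lambda>k l. B $ l $ k)"
    unfolding ginv_def
  proof (rule the_equality)
    show "\<forall>k m. (\<Sum>l\<in>UNIV. B $ l $ k * gfr g e m l p) = (if k = m then 1 else 0)" using P by blast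
  next
    fix H assume H: "\<forall>k m. (\<Sum>l\<in>UNIV. H k l * gfr g e m l p) = (if k = m then 1 else 0)"
    define B' :: "complex^'n^'n" where "B' = (\<chi> l k. H k l)"
    have "Gm ** B' = mat 1"
      using H by (auto simp: vec_eq_iff matrix_matrix_mult_def mat_def Gm_def B'_def mult_ac)
    then have "B' = B"
      by (metis BG matrix_mul_assoc matrix_mul_lid matrix_mul_rid)
    then show "H = (\<lambda>k l. B $ l $ k)" unfolding B'_def by (auto simp: vec_eq_iff)
  qed
  moreover have "(\<Sum>l\<in>UNIV. B $ k $ l * gfr g e l m p) = (if k = m then 1 else 0)" for k m
  proof -
    have "(B ** Gm) $ k $ m = (mat 1 :: complex^'n^'n) $ k $ m" using BG by simp
    then show ?thesis by (auto simp: matrix_matrix_mult_def mat_def Gm_def)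
  qed
  ultimately show ?thesis using P by simp
qed

lemma ginv_left: "(\<Sum>l\<in>UNIV. ginv g e p k l * gfr g e m l p) = (if k = m then 1 else 0)"
  using ginv_props by blast
lemma ginv_right: "(\<Sum>l\<in>UNIV. ginv g e p l k * gfr g e l m p) = (if k = m then 1 else 0)"
  using ginv_props by blast

end



lemma sum_delta_mult[simp]: "(\<Sum>m\<in>(UNIV::'a::finite set). f m * (if k = m then (1::complex) else 0)) = f k"
proof -
  have "(\<Sum>m\<in>(UNIV::'a set). f m * (if k = m then (1::complex) else 0)) = (\<Sum>m\<in>UNIV. if m = k then f m else 0)"
    by (intro sum.cong) auto
  then show ?thesis by simp
qed

definition sg :: "'n + 'n \<Rightarrow> complex" where "sg D = (case D of Inl _ \<Rightarrow> \<i> | Inr _ \<Rightarrow> - \<i>)"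

context AHF begin

lemma JcE: "Jc J p (\<Sum>D\<in>UNIV. c D *s frameE e D p) = (\<Sum>D\<in>UNIV. (c D * sg D) *s frameE e D p)"
  unfolding Jc_sum Jc_scale
  by (simp add: sum_Plus_UNIV sg_def f10_J[OF e10 pU] f10_Jbar[OF e10 pU] vector_smult_assoc mult_ac)

lemma coef10:
  assumes w: "w = (\<Sum>D\<in>UNIV. c D *s frameE e D p)" and J: "Jc J p w = \<i> *s w"
  shows "c (Inr a) = 0"
proof -
  have "(\<Sum>D\<in>UNIV. (c D * sg D - \<i> * c D) *s frameE e D p) = 0"
    using J unfolding w JcE by (simp add: vec_eq_iff left_diff_distrib sum_subtractf sum_distrib_left mult_ac)
  then have "c (Inr a) * sg (Inr a) - \<i> * c (Inr a) = 0" by (rule indepE)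
  then show ?thesis by (simp add: sg_def)
qed

lemma coef01:
  assumes w: "w = (\<Sum>D\<in>UNIV. c D *s frameE e D p)" and J: "Jc J p w = (- \<i>) *s w"
  shows "c (Inl a) = 0"
proof -
  have "(\<Sum>D\<in>UNIV. (c D * sg D + \<i> * c D) *s frameE e D p) = 0"
    using J unfolding w JcE by (simp add: vec_eq_iff distrib_right sum.distrib sum_distrib_left mult_ac sum_negf)
  then have "c (Inl a) * sg (Inl a) + \<i> * c (Inl a) = 0" by (rule indepE)
  then show ?thesis by (simp add: sg_def)
qed

lemma gc_bb: "gc g p (fcnj (e a) p) (fcnj (e b) p) = 0"
  by (rule gc_01[OF pU f10_Jbar[OF e10 pU] f10_Jbar[OF e10 pU]])
lemma gc_bb': "gc g p (vcnj (e a p)) (vcnj (e b p)) = 0"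
  using gc_bb unfolding fcnj_def .
lemma gc_ee: "gc g p (e a p) (e b p) = 0"
  by (rule gc_10[OF pU f10_J[OF e10 pU] f10_J[OF e10 pU]])

lemma gcE_l: "gc g p (\<Sum>D\<in>UNIV. c D *s frameE e D p) (fcnj (e l) p) = (\<Sum>m\<in>UNIV. c (Inl m) * gfr g e m l p)"
  by (simp add: gc_sum_left gc_scale_left sum_Plus_UNIV gc_bb' gc_add_left gfr_def fcnj_def)

lemma gcE_r: "gc g p (e l p) (\<Sum>D\<in>UNIV. c D *s frameE e D p) = (\<Sum>m\<in>UNIV. c (Inr m) * gfr g e l m p)"
  by (simp add: gc_sum_right gc_scale_right sum_Plus_UNIV gc_ee gc_add_right gfr_def fcnj_def)

lemma gcEE:
  assumes "\<And>a. c (Inr a) = 0" "\<And>b. d (Inl b) = 0"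
  shows "gc g p (\<Sum>D\<in>UNIV. c D *s frameE e D p) (\<Sum>D\<in>UNIV. d D *s frameE e D p)
     = (\<Sum>a\<in>UNIV. \<Sum>b\<in>UNIV. c (Inl a) * d (Inr b) * gfr g e a b p)"
  using assms
  by (simp add: sum_Plus_UNIV gc_add_left gc_add_right gc_sum_left gc_sum_right gc_scale_left gc_scale_right gfr_def fcnj_def
      sum_distrib_left mult_ac) (rule sum.swap)

lemma gfr_fun: "gfr g e j l = (\<lambda>y. gc g y (e j y) (fcnj (e l) y))"
  by (simp add: fun_eq_iff gfr_def fcnj_def)

lemma vf_gfr:
  assumes "ah_field U X" "y \<in> U"
  shows "ah_vf X (gfr g e j l) y = gc g y (nablav Gam y (X y) (e j)) (fcnj (e l) y)
           + gc g y (e j y) (nablav Gam y (X y) (fcnj (e l)))"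
  unfolding ah_vf_def gfr_fun using metric[OF ef efb assms(2)] .

lemma parta: "chr Gam e (Inr j) (Inl k) (Inl l) p = 0"
proof -
  have "nabla Gam (frameE e (Inr j)) (frameE e (Inl k)) p = (\<Sum>D\<in>UNIV. (\<lambda>D. 0) D *s frameE e D p)"
    using vecA by simp
  then show ?thesis by (rule chr_eq)
qed

lemma partb: "chr Gam e (Inl j) (Inr k) (Inr l) p = 0"
proof -
  have "nabla Gam (frameE e (Inl j)) (frameE e (Inr k)) p = (\<Sum>D\<in>UNIV. (\<lambda>D. 0) D *s frameE e D p)"
    using vecB by simp
  then show ?thesis by (rule chr_eq)
qed

lemma partd: "chr Gam e (Inl i) (Inl j) (Inl k) p =
        (\<Sum>l\<in>UNIV. ah_vf (e i) (gfr g e j l) p * ginv g e p k l)"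
proof -
  obtain c where c: "nabla Gam (e i) (e j) p = (\<Sum>D\<in>UNIV. c D *s frameE e D p)" using spanE by blast
  have ch: "chr Gam e (Inl i) (Inl j) (Inl k) p = c (Inl k)" using c by (intro chr_eq) simp
  have vf: "ah_vf (e i) (gfr g e j l) p = (\<Sum>m\<in>UNIV. c (Inl m) * gfr g e m l p)" for l
    using vf_gfr[OF ef pU, of i j l] vecB[of i l] c gcE_l unfolding nabla_def by simp
  have "(\<Sum>l\<in>UNIV. ah_vf (e i) (gfr g e j l) p * ginv g e p k l)
      = (\<Sum>l\<in>UNIV. \<Sum>m\<in>UNIV. c (Inl m) * (ginv g e p k l * gfr g e m l p))"
    unfolding vf by (simp add: sum_distrib_left sum_distrib_right mult_ac)
  also have "\<dots> = (\<Sum>m\<in>UNIV. c (Inl m) * (\<Sum>l\<in>UNIV. ginv g e p k l * gfr g e m l p))"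
    by (subst sum.swap) (simp add: sum_distrib_left)
  also have "\<dots> = c (Inl k)" by (simp add: ginv_left)
  finally show ?thesis using ch by simp
qed

lemma parte: "chr Gam e (Inr i) (Inr j) (Inr k) p =
        (\<Sum>l\<in>UNIV. ah_vf (fcnj (e i)) (gfr g e l j) p * ginv g e p l k)"
proof -
  obtain c where c: "nabla Gam (fcnj (e i)) (fcnj (e j)) p = (\<Sum>D\<in>UNIV. c D *s frameE e D p)" using spanE by blast
  have ch: "chr Gam e (Inr i) (Inr j) (Inr k) p = c (Inr k)" using c by (intro chr_eq) simp
  have vf: "ah_vf (fcnj (e i)) (gfr g e l j) p = (\<Sum>m\<in>UNIV. c (Inr m) * gfr g e l m p)" for l
    using vf_gfr[OF efb pU, of i l j] vecA[of i l] c gcE_r unfolding nabla_def by simp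
  have "(\<Sum>l\<in>UNIV. ah_vf (fcnj (e i)) (gfr g e l j) p * ginv g e p l k)
      = (\<Sum>l\<in>UNIV. \<Sum>m\<in>UNIV. c (Inr m) * (ginv g e p l k * gfr g e l m p))"
    unfolding vf by (simp add: sum_distrib_left sum_distrib_right mult_ac)
  also have "\<dots> = (\<Sum>m\<in>UNIV. c (Inr m) * (\<Sum>l\<in>UNIV. ginv g e p l k * gfr g e l m p))"
    by (subst sum.swap) (simp add: sum_distrib_left)
  also have "\<dots> = c (Inr k)" by (simp add: ginv_right)
  finally show ?thesis using ch by simp
qed

end



lemma sum_delta_mult'[simp]: "(\<Sum>m\<in>(UNIV::'a::finite set). f m * (if m = k then (1::complex) else 0)) = f k"
proof -
  have "(\<Sum>m\<in>(UNIV::'a set). f m * (if m = k then (1::complex) else 0)) = (\<Sum>m\<in>UNIV. if m = k then f m else 0)"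
    by (intro sum.cong) auto
  then show ?thesis by simp
qed

context AHF begin

lemma partg:
  assumes q: "\<forall>i. quasi_hol U J (e i) p"
  shows "curv g Gam e i j k l p =
           - ah_vf (fcnj (e j)) (ah_vf (e i) (gfr g e k l)) p
           + (\<Sum>a\<in>UNIV. \<Sum>b\<in>UNIV. ginv g e p a b * ah_vf (e i) (gfr g e k b) p
                                     * ah_vf (fcnj (e j)) (gfr g e a l) p)"
proof -
  define N1 where "N1 = nabla Gam (e i) (e k)"
  define N2 where "N2 = nabla Gam (e i) (fcnj (e l))"
  define W where "W = nabla Gam (fcnj (e i)) (e l)"
  define M where "M = nabla Gam (fcnj (e j)) (fcnj (e l))"
  define F where "F = ah_vf (e i) (gfr g e k l)"
  have N1f: "ah_field U N1" unfolding N1_def by (intro field_nabla ef)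
  have N2f: "ah_field U N2" unfolding N2_def by (intro field_nabla ef efb)
  have Wf: "ah_field U W" unfolding W_def by (intro field_nabla ef efb)
  have FU: "F y = gc g y (N1 y) (fcnj (e l) y) + gc g y (e k y) (N2 y)" if "y \<in> U" for y
    unfolding F_def N1_def N2_def nabla_def using vf_gfr[OF ef that] .
  have d1: "(\<lambda>y. gc g y (N1 y) (fcnj (e l) y)) differentiable (at p)"
    by (rule smooth_diff[OF smooth_gc[OF N1f efb] pU])
  have d2: "(\<lambda>y. gc g y (e k y) (N2 y)) differentiable (at p)"
    by (rule smooth_diff[OF smooth_gc[OF ef N2f] pU])
  have T3: "nablav Gam p (fcnj (e j) p) (e k) = 0" using vecA[of j k] unfolding nabla_def .
  have N2W: "N2 y = fcnj W y" if "y \<in> U" for y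
  proof -
    have "N2 y = nablav Gam y (vcnj (fcnj (e i) y)) (fcnj (e l))" unfolding N2_def nabla_def fcnj_def by simp
    also have "\<dots> = vcnj (nablav Gam y (fcnj (e i) y) (e l))" by (rule nablav_cnj[OF field_vdiff[OF ef that]])
    finally show ?thesis unfolding W_def nabla_def fcnj_def .
  qed
  have T4: "nablav Gam p (fcnj (e j) p) N2 = 0"
  proof -
    have "nablav Gam p (fcnj (e j) p) N2 = nablav Gam p (vcnj (e j p)) (fcnj W)"
      unfolding fcnj_def[of "e j"] by (rule nablav_cong[OF opU pU N2W])
    also have "\<dots> = vcnj (nablav Gam p (e j p) W)" by (rule nablav_cnj[OF field_vdiff[OF Wf pU]])
    also have "\<dots> = 0" using partf[OF q, of j i l] unfolding W_def nabla_def by simp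
    finally show ?thesis .
  qed
  have dF: "ah_vf (fcnj (e j)) F p = gc g p (nabla Gam (fcnj (e j)) N1 p) (fcnj (e l) p) + gc g p (N1 p) (M p)"
  proof -
    have "ah_vf (fcnj (e j)) F p = ah_dirc (fcnj (e j) p) (\<lambda>y. gc g y (N1 y) (fcnj (e l) y) + gc g y (e k y) (N2 y)) p"
      unfolding ah_vf_def by (rule dirc_cong[OF opU pU FU])
    also have "\<dots> = ah_dirc (fcnj (e j) p) (\<lambda>y. gc g y (N1 y) (fcnj (e l) y)) p + ah_dirc (fcnj (e j) p) (\<lambda>y. gc g y (e k y) (N2 y)) p"
      by (rule dirc_add[OF d1 d2])
    also have "\<dots> = gc g p (nablav Gam p (fcnj (e j) p) N1) (fcnj (e l) p) + gc g p (N1 p) (nablav Gam p (fcnj (e j) p) (fcnj (e l)))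
        + (gc g p (nablav Gam p (fcnj (e j) p) (e k)) (N2 p) + gc g p (e k p) (nablav Gam p (fcnj (e j) p) N2))"
      using metric[OF N1f efb pU] metric[OF ef N2f pU] by simp
    finally show ?thesis unfolding T3 T4 M_def nabla_def by simp
  qed
  have A1: "nabla Gam (e i) (nabla Gam (fcnj (e j)) (e k)) p = 0" by (rule partf[OF q])
  have A3: "nabla Gam (ah_lie (e i) (fcnj (e j))) (e k) p = 0" unfolding nabla_def vecC by simp
  have curv1: "curv g Gam e i j k l p = - gc g p (nabla Gam (fcnj (e j)) N1 p) (fcnj (e l) p)"
    unfolding curv_def A1 A3 N1_def by (simp add: gc_neg_left fcnj_def)
  obtain c where c: "N1 p = (\<Sum>D\<in>UNIV. c D *s frameE e D p)" using spanE by blast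
  obtain d where d: "M p = (\<Sum>D\<in>UNIV. d D *s frameE e D p)" using spanE by blast
  have c0: "c (Inr a) = 0" for a
    by (rule coef10[OF c]) (unfold N1_def nabla_def, rule nab_eigen[OF ef f10_J[OF e10] pU])
  have d0: "d (Inl b) = 0" for b
    by (rule coef01[OF d]) (unfold M_def nabla_def, rule nab_eigen[OF efb f10_Jbar[OF e10] pU])
  have cc: "c (Inl a) = (\<Sum>m\<in>UNIV. ah_vf (e i) (gfr g e k m) p * ginv g e p a m)" for a
  proof -
    have "chr Gam e (Inl i) (Inl k) (Inl a) p = c (Inl a)" using c unfolding N1_def by (intro chr_eq) simp
    then show ?thesis using partd by simp
  qed
  have dd: "d (Inr b) = (\<Sum>n\<in>UNIV. ah_vf (fcnj (e j)) (gfr g e n l) p * ginv g e p n b)" for b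
  proof -
    have "chr Gam e (Inr j) (Inr l) (Inr b) p = d (Inr b)" using d unfolding M_def by (intro chr_eq) simp
    then show ?thesis using parte by simp
  qed
  have inner: "(\<Sum>b\<in>UNIV. d (Inr b) * gfr g e a b p) = ah_vf (fcnj (e j)) (gfr g e a l) p" for a
  proof -
    have "(\<Sum>b\<in>UNIV. d (Inr b) * gfr g e a b p)
        = (\<Sum>b\<in>UNIV. \<Sum>n\<in>UNIV. ah_vf (fcnj (e j)) (gfr g e n l) p * (ginv g e p n b * gfr g e a b p))"
      unfolding dd by (simp add: sum_distrib_left sum_distrib_right mult_ac)
    also have "\<dots> = (\<Sum>n\<in>UNIV. ah_vf (fcnj (e j)) (gfr g e n l) p * (\<Sum>b\<in>UNIV. ginv g e p n b * gfr g e a b p))"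
      by (subst sum.swap) (simp add: sum_distrib_left)
    also have "\<dots> = ah_vf (fcnj (e j)) (gfr g e a l) p" by (simp add: ginv_left)
    finally show ?thesis .
  qed
  have "gc g p (N1 p) (M p) = (\<Sum>a\<in>UNIV. \<Sum>b\<in>UNIV. c (Inl a) * d (Inr b) * gfr g e a b p)"
    unfolding c d by (rule gcEE[of c d, OF c0 d0])
  also have "\<dots> = (\<Sum>a\<in>UNIV. c (Inl a) * (\<Sum>b\<in>UNIV. d (Inr b) * gfr g e a b p))"
    by (simp add: sum_distrib_left mult_ac)
  also have "\<dots> = (\<Sum>a\<in>UNIV. c (Inl a) * ah_vf (fcnj (e j)) (gfr g e a l) p)"
    by (simp add: inner)
  also have "\<dots> = (\<Sum>a\<in>UNIV. \<Sum>b\<in>UNIV. ginv g e p a b * ah_vf (e i) (gfr g e k b) p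
                                     * ah_vf (fcnj (e j)) (gfr g e a l) p)"
    unfolding cc by (simp add: sum_distrib_left sum_distrib_right mult_ac)
  finally have G: "gc g p (N1 p) (M p) = \<dots>" .
  show ?thesis using curv1 dF G unfolding F_def by (simp add: algebra_simps)
qed

lemma parth:
  assumes n: "\<forall>i. normal_quasi_hol U J Gam (e i) p"
  shows "curv g Gam e i j k l p = - ah_vf (fcnj (e j)) (ah_vf (e i) (gfr g e k l)) p"
proof -
  have q: "\<forall>i. quasi_hol U J (e i) p" using n unfolding normal_quasi_hol_def by blast
  have nv: "nablav Gam p v (e k) = 0" for v using n unfolding normal_quasi_hol_def nabla_vanishes_def by blast
  have X0: "ah_vf (e i) (gfr g e k b) p = 0" for b
    using vf_gfr[OF ef pU, of i k b] nv vecB[of i b] unfolding nabla_def by simp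
  show ?thesis using partg[OF q, of i j k l] X0 by simp
qed

end


theorem lemma3p5:
  fixes U :: "(real^'m) set"
    and J g :: "real^'m \<Rightarrow> real^'m^'m"
    and Gam :: "real^'m \<Rightarrow> 'm \<Rightarrow> 'm \<Rightarrow> 'm \<Rightarrow> real"
    and e :: "'n::finite \<Rightarrow> real^'m \<Rightarrow> complex^'m"
    and p :: "real^'m"
  assumes dim: "CARD('m) = 2 * CARD('n)"
    and AH: "almost_hermitian U J g"
    and CC: "canonical_connection U J g Gam"
    and pU: "p \<in> U"
    and fr: "frame10 U J e"
    and ph: "\<forall>i. pseudo_hol U J (e i) p"
  shows
    "(\<forall>j k l. chr Gam e (Inr j) (Inl k) (Inl l) p = 0)
   \<and> (\<forall>j k l. chr Gam e (Inl j) (Inr k) (Inr l) p = 0)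
   \<and> (\<forall>j k. ah_lie (e j) (fcnj (e k)) p = 0)
   \<and> (\<forall>i j k. chr Gam e (Inl i) (Inl j) (Inl k) p =
        (\<Sum>l\<in>UNIV. ah_vf (e i) (gfr g e j l) p * ginv g e p k l))
   \<and> (\<forall>i j k. chr Gam e (Inr i) (Inr j) (Inr k) p =
        (\<Sum>l\<in>UNIV. ah_vf (fcnj (e i)) (gfr g e l j) p * ginv g e p l k))
   \<and> ((\<forall>i. quasi_hol U J (e i) p) \<longrightarrow>
        (\<forall>i j k. nabla Gam (e i) (nabla Gam (fcnj (e j)) (e k)) p = 0))
   \<and> ((\<forall>i. quasi_hol U J (e i) p) \<longrightarrow>
        (\<forall>i j k l. curv g Gam e i j k l p =
           - ah_vf (fcnj (e j)) (ah_vf (e i) (gfr g e k l)) p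
           + (\<Sum>a\<in>UNIV. \<Sum>b\<in>UNIV. ginv g e p a b * ah_vf (e i) (gfr g e k b) p
                                     * ah_vf (fcnj (e j)) (gfr g e a l) p)))
   \<and> ((\<forall>i. normal_quasi_hol U J Gam (e i) p) \<longrightarrow>
        (\<forall>i j k l. curv g Gam e i j k l p =
           - ah_vf (fcnj (e j)) (ah_vf (e i) (gfr g e k l)) p))"
proof -
  interpret L: AHF U J g Gam e p
    by (intro AHF.intro AHC.intro AHF_axioms.intro AH CC dim pU fr ph)
  show ?thesis
    apply (intro conjI allI impI)
           apply (rule L.parta)
          apply (rule L.partb)
         apply (rule L.vecC)
        apply (rule L.partd)
       apply (rule L.parte)
      apply (erule L.partf)
     apply (erule L.partg)
    apply (erule L.parth)
    done
qed

end
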